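(* For $n\geq 2$ let $k_n$ be the number of ordered pairs of words $(w,z)$ over the alphabet $\{A,B,C,D\}$ satisfying: (i) both $w$ and $z$ start with the letter $A$, and $|w|+|z|=n$; (ii) $w$ and $z$ contain the same number of letters $A$; (iii) neither $w$ nor $z$ contains a $CB$-factor (a letter $C$ immediately followed by a letter $B$); (iv) for all $i$, if the $i$th letter $A$ from the right in $w$ is immediately preceded by a $C$ and immediately followed by a $B$, then the $i$th segment of $z$ from the left contains a letter $B$; (v) for all $i$, if the $i$th letter $A$ from the right in $w$ is immediately preceded by a $C$ and immediately followed by two consecutive letters $B$, then the $i$th segment of $z$ from the left contains at least two letters $B$. Let $K(x)=\sum_{n\geq 2}k_nx^n$. Then \[K(x)=\frac{x^2(1-2x)^2}{1-10x+38x^2-70x^3+66x^4-33x^5+12x^6-6x^7+4x^8-x^9}.\]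
   Context: A segment of a word $v$ over $\{A,B,C,D\}$ is a factor (consecutive letters) that starts with a letter $A$ and ends immediately before the next letter $A$, or at the end of $v$. The $i$th segment from the left is the one starting at the $i$th letter $A$ from the left. The words $w$ and $z$ need not have the same length. *)

theory Defs
  imports "HOL-Computational_Algebra.Formal_Power_Series"
begin

datatype letter = A | B | C | D

definition posA :: "letter list \<Rightarrow> nat list" where
  "posA v = filter (\<lambda>j. v ! j = A) [0..<length v]"

definition numA :: "letter list \<Rightarrow> nat" where
  "numA v = length (posA v)"

text \<open>Position of the (i+1)-th letter A from the right (i is 0-based).\<close>
definition posA_right :: "letter list \<Rightarrow> nat \<Rightarrow> nat" where
  "posA_right v i = posA v ! (numA v - 1 - i)"

text \<open>The (i+1)-th segment from the left (i is 0-based): starts at the (i+1)-th A and ends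
  immediately before the next A, or at the end of the word.\<close>
definition segment :: "letter list \<Rightarrow> nat \<Rightarrow> letter list" where
  "segment v i =
     (let ps = posA v; s = ps ! i;
          e = (if i + 1 < length ps then ps ! (i + 1) else length v)
      in take (e - s) (drop s v))"

definition countB :: "letter list \<Rightarrow> nat" where
  "countB v = length (filter (\<lambda>x. x = B) v)"

definition has_CB :: "letter list \<Rightarrow> bool" where
  "has_CB v \<longleftrightarrow> (\<exists>j. j + 1 < length v \<and> v ! j = C \<and> v ! (j + 1) = B)"

definition good_pair :: "nat \<Rightarrow> letter list \<Rightarrow> letter list \<Rightarrow> bool" where
  "good_pair n w z \<longleftrightarrow>
     w \<noteq> [] \<and> z \<noteq> [] \<and> hd w = A \<and> hd z = A \<and> length w + length z = n \<and>
     numA w = numA z \<and>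
     \<not> has_CB w \<and> \<not> has_CB z \<and>
     (\<forall>i < numA w. let p = posA_right w i in
        (0 < p \<and> w ! (p - 1) = C \<and> p + 1 < length w \<and> w ! (p + 1) = B)
          \<longrightarrow> countB (segment z i) \<ge> 1) \<and>
     (\<forall>i < numA w. let p = posA_right w i in
        (0 < p \<and> w ! (p - 1) = C \<and> p + 2 < length w \<and> w ! (p + 1) = B \<and> w ! (p + 2) = B)
          \<longrightarrow> countB (segment z i) \<ge> 2)"

definition kseq :: "nat \<Rightarrow> nat" where
  "kseq n = card {(w, z). good_pair n w z}"

end

theory Submission
  imports Defs
begin


lemma has_CB_Nil[simp]: "\<not> has_CB []" by (simp add: has_CB_def)

lemma has_CB_Cons: "has_CB (x#xs) \<longleftrightarrow> (xs \<noteq> [] \<and> x = C \<and> hd xs = B) \<or> has_CB xs"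
proof
  assume "has_CB (x#xs)"
  then obtain j where j: "j + 1 < length (x#xs)" "(x#xs) ! j = C" "(x#xs) ! (j+1) = B"
    unfolding has_CB_def by blast
  show "(xs \<noteq> [] \<and> x = C \<and> hd xs = B) \<or> has_CB xs"
  proof (cases j)
    case 0 then show ?thesis using j by (cases xs) auto
  next
    case (Suc k) then show ?thesis using j unfolding has_CB_def by auto
  qed
next
  assume "(xs \<noteq> [] \<and> x = C \<and> hd xs = B) \<or> has_CB xs"
  then show "has_CB (x#xs)"
  proof
    assume h: "xs \<noteq> [] \<and> x = C \<and> hd xs = B"
    then show ?thesis unfolding has_CB_def
      by (intro exI[of _ 0]) (cases xs, auto)
  next
    assume "has_CB xs"
    then obtain j where j: "j + 1 < length xs" "xs ! j = C" "xs ! (j+1) = B"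
      unfolding has_CB_def by blast
    then show ?thesis unfolding has_CB_def by (intro exI[of _ "Suc j"]) auto
  qed
qed

lemma has_CB_append: "has_CB (xs @ ys) \<longleftrightarrow> has_CB xs \<or> has_CB ys \<or>
   (xs \<noteq> [] \<and> ys \<noteq> [] \<and> last xs = C \<and> hd ys = B)"
  by (induction xs) (auto simp: has_CB_Cons)

lemma has_CB_snoc: "has_CB (xs @ [x]) \<longleftrightarrow> has_CB xs \<or> (xs \<noteq> [] \<and> last xs = C \<and> x = B)"
  by (simp add: has_CB_append has_CB_Cons)

lemma countB_Nil[simp]: "countB [] = 0" by (simp add: countB_def)
lemma countB_Cons[simp]: "countB (x#xs) = (if x = B then 1 else 0) + countB xs"
  by (simp add: countB_def)
lemma countB_append[simp]: "countB (xs @ ys) = countB xs + countB ys"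
  by (simp add: countB_def)

lemma posA_append: "posA (xs @ ys) = posA xs @ map (\<lambda>j. j + length xs) (posA ys)"
proof -
  have u: "[0..<length (xs@ys)] = [0..<length xs] @ map (\<lambda>j. j + length xs) [0..<length ys]"
    by (simp add: map_add_upt upt_add_eq_append[of 0 "length xs" "length ys", simplified] add.commute)
  have f1: "filter (\<lambda>j. (xs@ys) ! j = A) [0..<length xs] = filter (\<lambda>j. xs ! j = A) [0..<length xs]"
    by (rule filter_cong) (auto simp: nth_append)
  have f2: "filter (\<lambda>j. (xs@ys) ! j = A) (map (\<lambda>j. j + length xs) [0..<length ys])
      = map (\<lambda>j. j + length xs) (filter (\<lambda>j. ys ! j = A) [0..<length ys])"
    by (simp add: filter_map o_def nth_append)
  show ?thesis unfolding posA_def u by (simp add: f1 f2)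
qed

lemma posA_noA: "A \<notin> set v \<Longrightarrow> posA v = []"
  unfolding posA_def by (auto simp: filter_empty_conv in_set_conv_nth)

lemma posA_single: "posA [x] = (if x = A then [0] else [])"
  by (simp add: posA_def)

lemma posA_Cons_A: "A \<notin> set v \<Longrightarrow> posA (A # v) = [0]"
  using posA_append[of "[A]" v] by (simp add: posA_noA posA_single)

lemma numA_append: "numA (xs @ ys) = numA xs + numA ys"
  by (simp add: numA_def posA_append)

lemma set_posA: "set (posA v) = {j. j < length v \<and> v ! j = A}"
  by (auto simp: posA_def)

lemma numA_pos: assumes "v \<noteq> []" "hd v = A" shows "numA v > 0"
proof -
  have "0 \<in> set (posA v)" using assms by (cases v) (auto simp: set_posA)
  then show ?thesis unfolding numA_def by (cases "posA v") auto
qed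



definition NA :: "letter list \<Rightarrow> bool" where "NA v \<longleftrightarrow> A \<notin> set v \<and> \<not> has_CB v"
definition lastC :: "letter list \<Rightarrow> bool" where "lastC v \<longleftrightarrow> v \<noteq> [] \<and> last v = C"
definition cond :: "letter list \<Rightarrow> letter list \<Rightarrow> bool" where
  "cond v u \<longleftrightarrow> ((\<exists>r. v = B#r) \<longrightarrow> 1 \<le> countB u) \<and> ((\<exists>r. v = B#B#r) \<longrightarrow> 2 \<le> countB u)"

definition QQ :: "letter list \<Rightarrow> nat \<Rightarrow> letter list \<Rightarrow> bool" where
  "QQ w p s \<longleftrightarrow>
     (0 < p \<and> w ! (p - 1) = C \<and> p + 1 < length w \<and> w ! (p + 1) = B \<longrightarrow> countB s \<ge> 1) \<and>
     (0 < p \<and> w ! (p - 1) = C \<and> p + 2 < length w \<and> w ! (p + 1) = B \<and> w ! (p + 2) = B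
          \<longrightarrow> countB s \<ge> 2)"

lemma gp_alt: "good_pair n w z \<longleftrightarrow>
     w \<noteq> [] \<and> z \<noteq> [] \<and> hd w = A \<and> hd z = A \<and> length w + length z = n \<and>
     numA w = numA z \<and> \<not> has_CB w \<and> \<not> has_CB z \<and>
     (\<forall>i < numA w. QQ w (posA_right w i) (segment z i))"
  unfolding good_pair_def QQ_def Let_def by blast

lemma QQ_left:
  assumes "p < length w'" "w' ! p = A"
  shows "QQ (w' @ A # v) p s \<longleftrightarrow> QQ w' p s"
proof -
  let ?W = "w' @ A # v"
  have e1: "0 < p \<Longrightarrow> ?W ! (p - 1) = w' ! (p - 1)"
  proof -
    assume "0 < p" then have "p - 1 < length w'" using assms by simp
    then show ?thesis by (simp add: nth_append)
  qed
  have e2: "(p+1 < length ?W \<and> ?W ! (p+1) = B) \<longleftrightarrow> (p+1 < length w' \<and> w' ! (p+1) = B)"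
  proof (cases "p + 1 < length w'")
    case True then show ?thesis by (simp add: nth_append)
  next
    case False then have "p + 1 = length w'" using assms by simp
    then show ?thesis by (simp add: nth_append)
  qed
  have e3: "(p+2 < length ?W \<and> ?W ! (p+1) = B \<and> ?W ! (p+2) = B) \<longleftrightarrow>
            (p+2 < length w' \<and> w' ! (p+1) = B \<and> w' ! (p+2) = B)"
  proof (cases "p + 2 < length w'")
    case True then show ?thesis by (simp add: nth_append)
  next
    case False
    then have "p + 2 = length w' \<or> p + 1 = length w'" using assms by linarith
    then show ?thesis
    proof
      assume h: "p + 2 = length w'"
      then have "?W ! (p+2) = A" by (simp add: nth_append)
      then show ?thesis using h by simp
    next
      assume h: "p + 1 = length w'"
      then have "?W ! (p+1) = A" by (simp add: nth_append)
      then show ?thesis using h by simp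
    qed
  qed
  show ?thesis unfolding QQ_def using e1 e2 e3 by (metis (no_types, lifting))
qed

lemma QQ_last:
  "QQ (w' @ A # v) (length w') (A # u) \<longleftrightarrow> (lastC w' \<longrightarrow> cond v u)"
proof (cases "w' = []")
  case True then show ?thesis by (simp add: QQ_def lastC_def)
next
  case False
  have l: "(w' @ A # v) ! (length w' - 1) = last w'"
    using False by (simp add: nth_append last_conv_nth)
  show ?thesis
  proof (cases v)
    case Nil then show ?thesis using False l by (simp add: QQ_def lastC_def cond_def)
  next
    case (Cons x v2)
    then show ?thesis using False l
      by (cases v2) (auto simp: QQ_def lastC_def cond_def nth_append)
  qed
qed

lemma posA_snocseg: "A \<notin> set v \<Longrightarrow> posA (w' @ A # v) = posA w' @ [length w']"
  using posA_append[of w' "A#v"] by (simp add: posA_Cons_A)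

lemma numA_snocseg: "A \<notin> set v \<Longrightarrow> numA (w' @ A # v) = Suc (numA w')"
  by (simp add: numA_def posA_snocseg)

lemma PR0: "A \<notin> set v \<Longrightarrow> posA_right (w' @ A # v) 0 = length w'"
  by (simp add: posA_right_def numA_snocseg posA_snocseg) (simp add: numA_def)

lemma PRS: assumes "A \<notin> set v" "k < numA w'"
  shows "posA_right (w' @ A # v) (Suc k) = posA_right w' k"
proof -
  have "numA w' - Suc k < length (posA w')" using assms by (simp add: numA_def)
  then show ?thesis using assms by (simp add: posA_right_def numA_snocseg posA_snocseg nth_append)
qed

lemma PR_props: assumes "k < numA w'"
  shows "posA_right w' k < length w' \<and> w' ! posA_right w' k = A"
proof -
  have "posA_right w' k \<in> set (posA w')" unfolding posA_right_def using assms
    by (simp add: numA_def)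
  then show ?thesis by (simp add: set_posA)
qed

lemma posA_hdA: "z' \<noteq> [] \<Longrightarrow> hd z' = A \<Longrightarrow> posA z' ! 0 = 0 \<and> posA z' \<noteq> []"
  by (cases z') (simp_all add: posA_def upt_conv_Cons del: upt_Suc)

lemma posA_segfirst: "A \<notin> set u \<Longrightarrow> posA (A # u @ z') = 0 # map (\<lambda>j. j + Suc (length u)) (posA z')"
  using posA_append[of "A#u" z'] by (simp add: posA_Cons_A)

lemma SEG0:
  assumes "A \<notin> set u" "z' = [] \<or> hd z' = A"
  shows "segment (A # u @ z') 0 = A # u"
proof (cases "z' = []")
  case True then show ?thesis using assms by (simp add: segment_def posA_Cons_A)
next
  case False
  then have "posA z' ! 0 = 0" "posA z' \<noteq> []" using assms posA_hdA by auto
  then show ?thesis using assms by (simp add: segment_def posA_segfirst Let_def nth_Cons')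
qed

lemma SEGS:
  assumes "A \<notin> set u" "k < numA z'"
  shows "segment (A # u @ z') (Suc k) = segment z' k"
proof -
  let ?L = "Suc (length u)"
  let ?ps = "posA z'"
  have kl: "k < length ?ps" using assms by (simp add: numA_def)
  have lt: "?ps ! k < length z'" using nth_mem[OF kl] by (simp add: set_posA)
  have lt2: "k + 1 < length ?ps \<Longrightarrow> ?ps ! (k+1) < length z'"
    using nth_mem[of "k+1" ?ps] by (simp add: set_posA)
  have d: "drop (?ps ! k + ?L) (A # u @ z') = drop (?ps ! k) z'"
    by simp
  show ?thesis using assms kl
    by (simp add: segment_def posA_segfirst Let_def d)
qed



lemma posA_Nil[simp]: "posA [] = []" by (simp add: posA_def)

lemma hcb_A: "has_CB (A # v) \<longleftrightarrow> has_CB v"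
  by (simp add: has_CB_Cons)

lemma hcb_W: "has_CB (w' @ A # v) \<longleftrightarrow> has_CB w' \<or> has_CB v"
  by (simp add: has_CB_append hcb_A)

lemma hcb_Z: "z' = [] \<or> hd z' = A \<Longrightarrow> has_CB (A # u @ z') \<longleftrightarrow> has_CB u \<or> has_CB z'"
  by (auto simp: has_CB_append hcb_A)

lemma numA_Z: "A \<notin> set u \<Longrightarrow> numA (A # u @ z') = Suc (numA z')"
  by (simp add: numA_def posA_segfirst)

lemma numA_zero: "z' = [] \<or> hd z' = A \<Longrightarrow> numA z' = 0 \<longleftrightarrow> z' = []"
  using numA_pos[of z'] by (auto simp: numA_def posA_def)

lemma decomp:
  assumes v: "A \<notin> set v" and u: "A \<notin> set u"
    and hw: "w' = [] \<or> hd w' = A" and hz: "z' = [] \<or> hd z' = A"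
  shows "good_pair n (w' @ A # v) (A # u @ z') \<longleftrightarrow>
    n = length w' + length z' + length v + length u + 2 \<and> NA v \<and> NA u \<and>
    ((w' = [] \<and> z' = []) \<or> good_pair (length w' + length z') w' z') \<and>
    (lastC w' \<longrightarrow> cond v u)"
proof -
  let ?W = "w' @ A # v" and ?Z = "A # u @ z'"
  have hdW: "hd ?W = A" using hw by (cases w') auto
  have nW: "numA ?W = Suc (numA w')" using v by (rule numA_snocseg)
  have nZ: "numA ?Z = Suc (numA z')" using u by (rule numA_Z)
  have cW: "has_CB ?W \<longleftrightarrow> has_CB w' \<or> has_CB v" by (rule hcb_W)
  have cZ: "has_CB ?Z \<longleftrightarrow> has_CB u \<or> has_CB z'" using hz by (rule hcb_Z)
  have q0: "QQ ?W (posA_right ?W 0) (segment ?Z 0) \<longleftrightarrow> (lastC w' \<longrightarrow> cond v u)"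
    using PR0[OF v] SEG0[OF u hz] QQ_last by simp
  have qS: "(\<forall>k < numA w'. QQ ?W (posA_right ?W (Suc k)) (segment ?Z (Suc k))) \<longleftrightarrow>
            (\<forall>k < numA w'. QQ w' (posA_right w' k) (segment z' k))"
    if eq: "numA w' = numA z'"
  proof -
    have "QQ ?W (posA_right ?W (Suc k)) (segment ?Z (Suc k)) \<longleftrightarrow>
          QQ w' (posA_right w' k) (segment z' k)" if k: "k < numA w'" for k
    proof -
      have "posA_right ?W (Suc k) = posA_right w' k" using PRS[OF v k] .
      moreover have "segment ?Z (Suc k) = segment z' k" using SEGS[OF u] k eq by simp
      moreover have "QQ ?W (posA_right w' k) s \<longleftrightarrow> QQ w' (posA_right w' k) s" for s
        using PR_props[OF k] QQ_left by blast
      ultimately show ?thesis by simp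
    qed
    then show ?thesis by blast
  qed
  have allW: "(\<forall>i < numA ?W. QQ ?W (posA_right ?W i) (segment ?Z i)) \<longleftrightarrow>
     QQ ?W (posA_right ?W 0) (segment ?Z 0) \<and>
     (\<forall>k < numA w'. QQ ?W (posA_right ?W (Suc k)) (segment ?Z (Suc k)))"
    unfolding nW by (rule All_less_Suc2)
  show ?thesis
  proof (cases "w' = []")
    case True
    then show ?thesis using hdW nW nZ cW cZ q0 allW numA_zero[OF hz] v u
      unfolding gp_alt[of n] gp_alt[of "length w' + length z'"]
      by (auto simp: NA_def lastC_def numA_def)
  next
    case False
    then have hw': "hd w' = A" using hw by simp
    have pw: "numA w' > 0" using numA_pos[OF False hw'] .
    show ?thesis
    proof (cases "z' = []")
      case True
      then show ?thesis using pw nW nZ unfolding gp_alt[of n] gp_alt[of "length w' + length z'"]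
        by (auto simp: numA_def posA_def)
    next
      case False
      then have hz': "hd z' = A" using hz by simp
      show ?thesis
      proof (cases "numA w' = numA z'")
        case eq: True
        show ?thesis using hdW nW nZ cW cZ q0 allW qS[OF eq] eq v u hw' hz' False \<open>w' \<noteq> []\<close>
          unfolding gp_alt[of n] gp_alt[of "length w' + length z'"]
          by (auto simp: NA_def)
      next
        case False
        then show ?thesis using nW nZ unfolding gp_alt[of n] gp_alt[of "length w' + length z'"]
          by auto
      qed
    qed
  qed
qed

lemma split_w:
  assumes "w \<noteq> []" "hd w = A"
  shows "\<exists>w' v. w = w' @ A # v \<and> A \<notin> set v \<and> (w' = [] \<or> hd w' = A)"
proof -
  have "A \<in> set w" using assms by (cases w) auto
  then obtain ys zs where "w = ys @ A # zs" "A \<notin> set zs" using split_list_last by metis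
  moreover have "ys = [] \<or> hd ys = A" using assms calculation by (cases ys) auto
  ultimately show ?thesis by blast
qed

lemma split_z:
  assumes "z \<noteq> []" "hd z = A"
  shows "\<exists>u z'. z = A # u @ z' \<and> A \<notin> set u \<and> (z' = [] \<or> hd z' = A)"
proof -
  obtain t where t: "z = A # t" using assms by (cases z) auto
  show ?thesis
  proof (cases "A \<in> set t")
    case True
    then obtain ys zs where "t = ys @ A # zs" "A \<notin> set ys" using split_list_first by metis
    then show ?thesis using t by (intro exI[of _ ys] exI[of _ "A # zs"]) auto
  next
    case False then show ?thesis using t by (intro exI[of _ t] exI[of _ "[]"]) auto
  qed
qed



lemma letter_UNIV: "(UNIV :: letter set) = {A, B, C, D}"
  by (auto intro: letter.exhaust)

lemma fin_le: "finite {xs :: letter list. length xs \<le> n}"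
proof -
  have "finite (UNIV :: letter set)" by (simp add: letter_UNIV)
  from finite_lists_length_le[OF this, of n] show ?thesis by simp
qed

lemma fin_pairs_le: "finite ({xs :: letter list. length xs \<le> n} \<times> {xs :: letter list. length xs \<le> n})"
  using fin_le by simp

definition GP' :: "nat \<Rightarrow> letter list \<Rightarrow> letter list \<Rightarrow> bool" where
  "GP' n w z \<longleftrightarrow> (n = 0 \<and> w = [] \<and> z = []) \<or> good_pair n w z"

definition GPs :: "nat \<Rightarrow> bool \<Rightarrow> (letter list \<times> letter list) set" where
  "GPs n e = {(w, z). GP' n w z \<and> lastC w = e}"

definition kk :: "nat \<Rightarrow> bool \<Rightarrow> nat" where "kk n e = card (GPs n e)"

definition Vs :: "bool \<Rightarrow> bool \<Rightarrow> nat \<Rightarrow> (letter list \<times> letter list) set" where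
  "Vs e' e m = {(v, u). length v + length u + 2 = m \<and> NA v \<and> NA u \<and> lastC v = e \<and> (e' \<longrightarrow> cond v u)}"

lemma GP'_len: "GP' n w z \<Longrightarrow> length w + length z = n"
  by (auto simp: GP'_def good_pair_def)

lemma GP'_hd: "GP' n w z \<Longrightarrow> (w = [] \<or> hd w = A) \<and> (z = [] \<or> hd z = A)"
  by (auto simp: GP'_def good_pair_def)

lemma fin_GPs: "finite (GPs n e)"
  by (rule finite_subset[OF _ fin_pairs_le[of n]]) (auto simp: GPs_def dest: GP'_len)

lemma fin_Vs: "finite (Vs e' e m)"
  by (rule finite_subset[OF _ fin_pairs_le[of m]]) (auto simp: Vs_def)

lemma lastC_W: "lastC (w' @ A # v) = lastC v"
  by (cases v rule: rev_cases) (auto simp: lastC_def)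

lemma inj_w: assumes "w1 @ A # v1 = w2 @ A # v2" "A \<notin> set v1" "A \<notin> set v2"
  shows "v1 = v2 \<and> w1 = w2"
proof -
  have r: "rev v1 @ A # rev w1 = rev v2 @ A # rev w2" using assms(1)
    by (metis rev.simps(2) rev_append rev_rev_ident append_assoc append_Cons append_Nil)
  have "takeWhile (\<lambda>x. x \<noteq> A) (rev v1 @ A # rev w1) = rev v1"
    using assms(2) by (subst takeWhile_append2) auto
  moreover have "takeWhile (\<lambda>x. x \<noteq> A) (rev v2 @ A # rev w2) = rev v2"
    using assms(3) by (subst takeWhile_append2) auto
  ultimately have "v1 = v2" using r by simp
  then show ?thesis using assms(1) by simp
qed

lemma inj_z: assumes "A # u1 @ z1 = A # u2 @ z2" "A \<notin> set u1" "A \<notin> set u2"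
   "z1 = [] \<or> hd z1 = A" "z2 = [] \<or> hd z2 = A"
  shows "u1 = u2 \<and> z1 = z2"
proof -
  have t1: "takeWhile (\<lambda>x. x \<noteq> A) (u1 @ z1) = u1"
    using assms(2,4) by (cases z1) (auto simp: takeWhile_append2, subst takeWhile_append2, auto)
  have t2: "takeWhile (\<lambda>x. x \<noteq> A) (u2 @ z2) = u2"
    using assms(3,5) by (cases z2) (auto simp: takeWhile_append2, subst takeWhile_append2, auto)
  have "u1 = u2" using t1 t2 assms(1) by simp
  then show ?thesis using assms(1) by simp
qed

definition ff :: "(letter list \<times> letter list) \<times> (letter list \<times> letter list) \<Rightarrow> letter list \<times> letter list" where
  "ff p = (case p of ((w', z'), (v, u)) \<Rightarrow> (w' @ A # v, A # u @ z'))"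

definition Dom :: "nat \<Rightarrow> bool \<Rightarrow> ((letter list \<times> letter list) \<times> (letter list \<times> letter list)) set" where
  "Dom n e = (\<Union>a\<in>{..<n}. \<Union>e'\<in>{True, False}. GPs a e' \<times> Vs e' e (n - a))"

lemma GPs_eq: assumes "n \<ge> 1" shows "GPs n e = ff ` Dom n e"
proof
  show "GPs n e \<subseteq> ff ` Dom n e"
  proof
    fix p assume p: "p \<in> GPs n e"
    obtain w z where wz: "p = (w, z)" by (cases p)
    have g: "good_pair n w z" and le: "lastC w = e" using p assms wz by (auto simp: GPs_def GP'_def)
    then have "w \<noteq> []" "hd w = A" "z \<noteq> []" "hd z = A" by (auto simp: good_pair_def)
    then obtain w' v u z' where w: "w = w' @ A # v" "A \<notin> set v" "w' = [] \<or> hd w' = A"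
      and z: "z = A # u @ z'" "A \<notin> set u" "z' = [] \<or> hd z' = A"
      using split_w split_z by metis
    have d: "n = length w' + length z' + length v + length u + 2 \<and> NA v \<and> NA u \<and>
      ((w' = [] \<and> z' = []) \<or> good_pair (length w' + length z') w' z') \<and> (lastC w' \<longrightarrow> cond v u)"
      using decomp[OF w(2) z(2) w(3) z(3)] g w z by simp
    let ?a = "length w' + length z'"
    have "GP' ?a w' z'" using d by (auto simp: GP'_def)
    then have "(w', z') \<in> GPs ?a (lastC w')" by (simp add: GPs_def)
    moreover have "(v, u) \<in> Vs (lastC w') e (n - ?a)"
      using d le w by (auto simp: Vs_def lastC_W)
    moreover have "?a < n" using d by simp
    ultimately have "((w', z'), (v, u)) \<in> Dom n e" unfolding Dom_def
      by (cases "lastC w'") blast+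
    moreover have "p = ff ((w', z'), (v, u))" using wz w z by (simp add: ff_def)
    ultimately show "p \<in> ff ` Dom n e" by blast
  qed
next
  show "ff ` Dom n e \<subseteq> GPs n e"
  proof
    fix p assume "p \<in> ff ` Dom n e"
    then obtain x where x: "x \<in> Dom n e" and p: "p = ff x" by blast
    obtain w' z' v u where X: "x = ((w', z'), (v, u))" by (metis prod.collapse)
    from x X obtain a e' where a: "a < n" and g: "(w', z') \<in> GPs a e'"
      and vu: "(v, u) \<in> Vs e' e (n - a)"
      unfolding Dom_def by blast
    have p: "p = ff ((w', z'), (v, u))" using p X by simp
    have G: "GP' a w' z'" and e': "lastC w' = e'" using g by (auto simp: GPs_def)
    have len: "length w' + length z' = a" using GP'_len[OF G] .
    have hd: "(w' = [] \<or> hd w' = A) \<and> (z' = [] \<or> hd z' = A)" using GP'_hd[OF G] .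
    have V: "length v + length u + 2 = n - a" "NA v" "NA u" "lastC v = e" "e' \<longrightarrow> cond v u"
      using vu by (auto simp: Vs_def)
    have "good_pair n (w' @ A # v) (A # u @ z')"
      using decomp[of v u w' z' n] V hd len a G e' by (auto simp: NA_def GP'_def)
    then show "p \<in> GPs n e" using p V(4) by (simp add: ff_def GPs_def GP'_def lastC_W)
  qed
qed

lemma inj_ff: "inj_on ff (Dom n e)"
proof
  fix p q assume p: "p \<in> Dom n e" and q: "q \<in> Dom n e" and eq: "ff p = ff q"
  obtain w1 z1 v1 u1 where P: "p = ((w1, z1), (v1, u1))" by (metis prod.collapse)
  obtain w2 z2 v2 u2 where Q: "q = ((w2, z2), (v2, u2))" by (metis prod.collapse)
  from p P obtain a1 e1 where "(w1, z1) \<in> GPs a1 e1" "(v1, u1) \<in> Vs e1 e (n - a1)"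
    unfolding Dom_def by blast
  then have h1: "A \<notin> set v1" "A \<notin> set u1" "z1 = [] \<or> hd z1 = A"
    by (auto simp: Vs_def NA_def GPs_def dest: GP'_hd)
  from q Q obtain a2 e2 where "(w2, z2) \<in> GPs a2 e2" "(v2, u2) \<in> Vs e2 e (n - a2)"
    unfolding Dom_def by blast
  then have h2: "A \<notin> set v2" "A \<notin> set u2" "z2 = [] \<or> hd z2 = A"
    by (auto simp: Vs_def NA_def GPs_def dest: GP'_hd)
  have "w1 @ A # v1 = w2 @ A # v2" "A # u1 @ z1 = A # u2 @ z2" using eq P Q by (auto simp: ff_def)
  then show "p = q" using inj_w inj_z h1 h2 P Q by metis
qed

lemma card_Dom: "card (Dom n e) = (\<Sum>a<n. kk a True * card (Vs True e (n - a)) + kk a False * card (Vs False e (n - a)))"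
proof -
  have inner: "card (\<Union>e'\<in>{True, False}. GPs a e' \<times> Vs e' e (n - a)) =
      kk a True * card (Vs True e (n - a)) + kk a False * card (Vs False e (n - a))" for a
  proof -
    have "GPs a True \<inter> GPs a False = {}" by (auto simp: GPs_def)
    then have "(GPs a True \<times> Vs True e (n - a)) \<inter> (GPs a False \<times> Vs False e (n - a)) = {}" by blast
    then show ?thesis using fin_GPs fin_Vs
      by (simp add: card_Un_disjoint kk_def card_cartesian_product)
  qed
  have "card (Dom n e) = (\<Sum>a<n. card (\<Union>e'\<in>{True, False}. GPs a e' \<times> Vs e' e (n - a)))"
    unfolding Dom_def
  proof (rule card_UN_disjoint)
    show "finite {..<n}" by simp
    show "\<forall>a\<in>{..<n}. finite (\<Union>e'\<in>{True, False}. GPs a e' \<times> Vs e' e (n - a))"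
      using fin_GPs fin_Vs by auto
    show "\<forall>i\<in>{..<n}. \<forall>j\<in>{..<n}. i \<noteq> j \<longrightarrow>
      (\<Union>e'\<in>{True, False}. GPs i e' \<times> Vs e' e (n - i)) \<inter> (\<Union>e'\<in>{True, False}. GPs j e' \<times> Vs e' e (n - j)) = {}"
      by (auto simp: GPs_def dest: GP'_len)
  qed
  then show ?thesis using inner by simp
qed

lemma kk_rec: "n \<ge> 1 \<Longrightarrow> kk n e = (\<Sum>a<n. kk a True * card (Vs True e (n - a)) + kk a False * card (Vs False e (n - a)))"
  using GPs_eq card_image[OF inj_ff] card_Dom by (simp add: kk_def)

lemma kk0: "kk 0 e = (if e then 0 else 1)"
proof -
  have "GPs 0 e = (if e then {} else {([], [])})"
    by (auto simp: GPs_def GP'_def good_pair_def lastC_def)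
  then show ?thesis by (simp add: kk_def)
qed

lemma kseq_kk: "n \<ge> 1 \<Longrightarrow> kseq n = kk n True + kk n False"
proof -
  assume n: "n \<ge> 1"
  have "{(w, z). good_pair n w z} = GPs n True \<union> GPs n False" using n
    by (auto simp: GPs_def GP'_def)
  moreover have "GPs n True \<inter> GPs n False = {}" by (auto simp: GPs_def)
  ultimately show ?thesis using fin_GPs by (simp add: kseq_def kk_def card_Un_disjoint)
qed



definition cnt :: "(letter list \<Rightarrow> bool) \<Rightarrow> nat \<Rightarrow> nat" where
  "cnt P n = card {v. length v = n \<and> P v}"

lemma fin_len: "finite {v :: letter list. length v = n \<and> P v}"
  by (rule finite_subset[OF _ fin_le[of n]]) auto

lemma snoc_ex: "length v = Suc n \<Longrightarrow> \<exists>u x. v = u @ [x] \<and> length u = n"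
  by (cases v rule: rev_cases) auto

lemma cnt_snoc: "cnt P (Suc n) = cnt (\<lambda>v. P (v @ [A])) n + cnt (\<lambda>v. P (v @ [B])) n
   + cnt (\<lambda>v. P (v @ [C])) n + cnt (\<lambda>v. P (v @ [D])) n"
proof -
  define S where "S x = (\<lambda>v. v @ [x]) ` {v. length v = n \<and> P (v @ [x])}" for x
  have sub: "{v. length v = Suc n \<and> P v} \<subseteq> S A \<union> S B \<union> S C \<union> S D"
  proof
    fix v assume v: "v \<in> {v. length v = Suc n \<and> P v}"
    then obtain u x where ux: "v = u @ [x]" "length u = n" using snoc_ex by blast
    then have "v \<in> S x" using v unfolding S_def by auto
    then show "v \<in> S A \<union> S B \<union> S C \<union> S D" by (cases x) auto
  qed
  have sup: "S x \<subseteq> {v. length v = Suc n \<and> P v}" for x unfolding S_def by auto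
  have eq: "{v. length v = Suc n \<and> P v} = S A \<union> S B \<union> S C \<union> S D"
    using sub sup by blast
  have card_S: "card (S x) = cnt (\<lambda>v. P (v @ [x])) n" for x
    unfolding cnt_def S_def by (rule card_image) (simp add: inj_on_def)
  have fin: "finite (S x)" for x unfolding S_def by (rule finite_imageI) (rule fin_len)
  have dj: "x \<noteq> y \<Longrightarrow> S x \<inter> S y = {}" for x y unfolding S_def by auto
  have c1: "card (S A \<union> S B) = card (S A) + card (S B)"
    by (rule card_Un_disjoint[OF fin fin]) (rule dj, simp)
  have c2: "card (S A \<union> S B \<union> S C) = card (S A \<union> S B) + card (S C)"
    by (rule card_Un_disjoint) (use fin dj in auto)
  have c3: "card (S A \<union> S B \<union> S C \<union> S D) = card (S A \<union> S B \<union> S C) + card (S D)"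
    by (rule card_Un_disjoint) (use fin dj in auto)
  show ?thesis unfolding cnt_def[of P] eq c3 c2 c1 card_S ..
qed

lemma cnt_0: "cnt P 0 = (if P [] then 1 else 0)"
proof -
  have "{v :: letter list. length v = 0 \<and> P v} = (if P [] then {[]} else {})" by auto
  then show ?thesis by (simp add: cnt_def)
qed

lemma cnt_cong: "(\<And>v. length v = n \<Longrightarrow> P v = Q v) \<Longrightarrow> cnt P n = cnt Q n"
  unfolding cnt_def by (metis (mono_tags, lifting) Collect_cong)

lemma cnt_split: "cnt P n = cnt (\<lambda>v. P v \<and> R v) n + cnt (\<lambda>v. P v \<and> \<not> R v) n"
proof -
  have "{v. length v = n \<and> P v} = {v. length v = n \<and> P v \<and> R v} \<union> {v. length v = n \<and> P v \<and> \<not> R v}"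
    by auto
  then show ?thesis unfolding cnt_def
    by (simp add: card_Un_disjoint[OF fin_len fin_len] disjoint_iff)
qed

lemma cnt_False: "cnt (\<lambda>v. False) n = 0" by (simp add: cnt_def)

lemma NA_snoc: "NA (v @ [x]) \<longleftrightarrow> NA v \<and> x \<noteq> A \<and> \<not> (lastC v \<and> x = B)"
  by (auto simp: NA_def has_CB_snoc lastC_def)

lemma lastC_snoc[simp]: "lastC (v @ [x]) \<longleftrightarrow> x = C" by (simp add: lastC_def)

lemma NA_Cons_B: "NA (B # r) \<longleftrightarrow> NA r" by (simp add: NA_def has_CB_Cons)

lemma lastC_Cons_B: "lastC (B # r) \<longleftrightarrow> lastC r" by (cases r) (auto simp: lastC_def)

definition "Wc e = cnt (\<lambda>v. NA v \<and> lastC v = e)"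
definition "Tc = cnt NA"
definition "Z0 = cnt (\<lambda>v. NA v \<and> countB v = 0)"
definition "Yc = cnt (\<lambda>v. NA v \<and> countB v = 0 \<and> \<not> lastC v)"
definition "Z1 = cnt (\<lambda>v. NA v \<and> countB v = 1)"

lemma Tc_W: "Tc n = Wc True n + Wc False n"
  unfolding Tc_def Wc_def using cnt_split[of NA n lastC] by simp

lemma NA_Nil[simp]: "NA []" by (simp add: NA_def)
lemma lastC_Nil[simp]: "\<not> lastC []" by (simp add: lastC_def)

lemma WT_0: "Wc True 0 = 0" by (simp add: Wc_def cnt_0)
lemma WF_0: "Wc False 0 = 1" by (simp add: Wc_def cnt_0)
lemma Z0_0: "Z0 0 = 1" by (simp add: Z0_def cnt_0)
lemma Yc_0: "Yc 0 = 1" by (simp add: Yc_def cnt_0)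
lemma Z1_0: "Z1 0 = 0" by (simp add: Z1_def cnt_0)

lemma WT_S: "Wc True (Suc n) = Tc n"
  unfolding Wc_def Tc_def cnt_snoc by (simp add: NA_snoc cnt_False)

lemma WF_S: "Wc False (Suc n) = Wc False n + Tc n"
  unfolding Wc_def Tc_def cnt_snoc by (simp add: NA_snoc cnt_False)

lemma Z0_S: "Z0 (Suc n) = 2 * Z0 n"
  unfolding Z0_def cnt_snoc by (simp add: NA_snoc cnt_False)

lemma Yc_S: "Yc (Suc n) = Z0 n"
  unfolding Yc_def Z0_def cnt_snoc by (simp add: NA_snoc cnt_False)

lemma Z1_S: "Z1 (Suc n) = Yc n + 2 * Z1 n"
proof -
  have "cnt (\<lambda>v. NA (v @ [B]) \<and> countB (v @ [B]) = 1) n = Yc n"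
    unfolding Yc_def by (rule cnt_cong) (auto simp: NA_snoc)
  then show ?thesis unfolding Z1_def cnt_snoc by (simp add: NA_snoc cnt_False)
qed



lemma PL: "card {(v, u). length v + length u = m \<and> P v \<and> Q u} = (\<Sum>i=0..m. cnt P i * cnt Q (m - i))"
proof -
  have eq: "{(v, u). length v + length u = m \<and> P v \<and> Q u} =
      (\<Union>i\<in>{0..m}. {v. length v = i \<and> P v} \<times> {u. length u = m - i \<and> Q u})"
    by auto
  have "card (\<Union>i\<in>{0..m}. {v. length v = i \<and> P v} \<times> {u. length u = m - i \<and> Q u}) =
        (\<Sum>i=0..m. card ({v. length v = i \<and> P v} \<times> {u. length u = m - i \<and> Q u}))"
    by (rule card_UN_disjoint) (auto intro: fin_len)
  then show ?thesis unfolding eq by (simp add: card_cartesian_product cnt_def)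
qed

lemma Vs_small: "m < 2 \<Longrightarrow> Vs e' e m = {}" by (auto simp: Vs_def)

lemma VsF: "card (Vs False e (m + 2)) = (\<Sum>i=0..m. Wc e i * Tc (m - i))"
proof -
  have "Vs False e (m + 2) = {(v, u). length v + length u = m \<and> (NA v \<and> lastC v = e) \<and> NA u}"
    by (auto simp: Vs_def)
  then show ?thesis using PL[of m "\<lambda>v. NA v \<and> lastC v = e" NA] by (simp add: Wc_def Tc_def)
qed

definition "S1 e = cnt (\<lambda>v. NA v \<and> lastC v = e \<and> (\<exists>r. v = B # r))"
definition "S2 e = cnt (\<lambda>v. NA v \<and> lastC v = e \<and> (\<exists>r. v = B # B # r))"

lemma cnt_Cons_B: "cnt (\<lambda>v. R v \<and> (\<exists>r. v = B # r)) (Suc i) = cnt (\<lambda>r. R (B # r)) i"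
proof -
  have "{v. length v = Suc i \<and> R v \<and> (\<exists>r. v = B # r)} = Cons B ` {r. length r = i \<and> R (B # r)}"
    by auto
  then show ?thesis unfolding cnt_def by (simp add: card_image)
qed

lemma S1_0: "S1 e 0 = 0" by (simp add: S1_def cnt_0)
lemma S1_S: "S1 e (Suc i) = Wc e i"
  unfolding S1_def Wc_def using cnt_Cons_B[of "\<lambda>v. NA v \<and> lastC v = e" i]
  by (simp add: NA_Cons_B lastC_Cons_B)

lemma S2_0: "S2 e 0 = 0" by (simp add: S2_def cnt_0)
lemma S2_S: "S2 e (Suc i) = S1 e i"
proof -
  have "S2 e (Suc i) = cnt (\<lambda>v. (NA v \<and> lastC v = e \<and> (\<exists>r. v = B # B # r)) \<and> (\<exists>r. v = B # r)) (Suc i)"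
    unfolding S2_def by (rule cnt_cong) auto
  also have "\<dots> = cnt (\<lambda>r. NA (B # r) \<and> lastC (B # r) = e \<and> (\<exists>r'. B # r = B # B # r')) i"
    by (rule cnt_Cons_B)
  also have "\<dots> = S1 e i" unfolding S1_def by (rule cnt_cong) (simp add: NA_Cons_B lastC_Cons_B)
  finally show ?thesis .
qed

lemma VsT: "card (Vs True e (m + 2)) + (\<Sum>i=0..m. S1 e i * Z0 (m - i)) + (\<Sum>i=0..m. S2 e i * Z1 (m - i))
   = card (Vs False e (m + 2))"
proof -
  define V1 where "V1 = {(v, u). length v + length u = m \<and> (NA v \<and> lastC v = e \<and> (\<exists>r. v = B # r)) \<and> (NA u \<and> countB u = 0)}"
  define V2 where "V2 = {(v, u). length v + length u = m \<and> (NA v \<and> lastC v = e \<and> (\<exists>r. v = B # B # r)) \<and> (NA u \<and> countB u = 1)}"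
  have c1: "card V1 = (\<Sum>i=0..m. S1 e i * Z0 (m - i))" unfolding V1_def PL S1_def Z0_def ..
  have c2: "card V2 = (\<Sum>i=0..m. S2 e i * Z1 (m - i))" unfolding V2_def PL S2_def Z0_def Z1_def ..
  have eq: "Vs False e (m + 2) = (Vs True e (m + 2) \<union> V1) \<union> V2"
    by (auto simp: Vs_def V1_def V2_def cond_def)
  have fV1: "finite V1" by (rule finite_subset[OF _ fin_pairs_le[of m]]) (auto simp: V1_def)
  have fV2: "finite V2" by (rule finite_subset[OF _ fin_pairs_le[of m]]) (auto simp: V2_def)
  have d1: "Vs True e (m + 2) \<inter> V1 = {}" by (auto simp: Vs_def V1_def cond_def)
  have d2: "(Vs True e (m + 2) \<union> V1) \<inter> V2 = {}" by (auto simp: Vs_def V1_def V2_def cond_def)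
  have "card (Vs False e (m + 2)) = card (Vs True e (m + 2)) + card V1 + card V2"
    unfolding eq using fin_Vs fV1 fV2 d1 d2 by (simp add: card_Un_disjoint)
  then show ?thesis using c1 c2 by simp
qed



definition FF :: "(nat \<Rightarrow> nat) \<Rightarrow> rat fps" where "FF f = Abs_fps (\<lambda>n. of_nat (f n))"

lemma FF_nth[simp]: "fps_nth (FF f) n = of_nat (f n)" by (simp add: FF_def)

abbreviation "X \<equiv> (fps_X :: rat fps)"

lemma fWT: "FF (Wc True) = X * FF Tc"
  by (rule fps_ext) (case_tac n, simp_all add: WT_0 WT_S)

lemma fWF: "FF (Wc False) = 1 + X * FF (Wc False) + X * FF Tc"
  by (rule fps_ext) (case_tac n, simp_all add: WF_0 WF_S)

lemma fT: "FF Tc = FF (Wc True) + FF (Wc False)"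
  by (rule fps_ext) (simp add: Tc_W)

lemma fZ0: "FF Z0 = 1 + X * FF Z0 + X * FF Z0"
  apply (rule fps_ext)
  apply (simp only: fps_add_nth fps_X_mult_nth fps_one_nth FF_nth)
  apply (case_tac n, simp_all add: Z0_0 Z0_S)
  done

lemma fY: "FF Yc = 1 + X * FF Z0"
  by (rule fps_ext) (case_tac n, simp_all add: Yc_0 Yc_S)

lemma fZ1: "FF Z1 = X * FF Yc + X * FF Z1 + X * FF Z1"
  apply (rule fps_ext)
  apply (simp only: fps_add_nth fps_X_mult_nth fps_one_nth FF_nth)
  apply (case_tac n, simp_all add: Z1_0 Z1_S)
  done

lemma fS1: "FF (S1 e) = X * FF (Wc e)"
  by (rule fps_ext) (case_tac n, simp_all add: S1_0 S1_S)

lemma fS2: "FF (S2 e) = X * FF (S1 e)"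
  by (rule fps_ext) (case_tac n, simp_all add: S2_0 S2_S)

definition "GG e' e = (\<lambda>m. card (Vs e' e m))"

lemma fGF: "FF (GG False e) = X^2 * (FF (Wc e) * FF Tc)"
proof (rule fps_ext)
  fix n
  show "fps_nth (FF (GG False e)) n = fps_nth (X^2 * (FF (Wc e) * FF Tc)) n"
  proof (cases "n < 2")
    case True then show ?thesis by (simp add: fps_X_power_mult_nth GG_def Vs_small)
  next
    case False
    then obtain m where n: "n = m + 2" by (metis add.commute le_Suc_ex not_less)
    show ?thesis using VsF[of e m] unfolding n fps_X_power_mult_nth
      by (simp add: GG_def fps_mult_nth)
  qed
qed

lemma fGT: "FF (GG True e) + X^2 * (FF (S1 e) * FF Z0) + X^2 * (FF (S2 e) * FF Z1) = FF (GG False e)"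
proof (rule fps_ext)
  fix n
  show "fps_nth (FF (GG True e) + X^2 * (FF (S1 e) * FF Z0) + X^2 * (FF (S2 e) * FF Z1)) n = fps_nth (FF (GG False e)) n"
  proof (cases "n < 2")
    case True then show ?thesis by (simp add: fps_X_power_mult_nth GG_def Vs_small)
  next
    case False
    then obtain m where n: "n = m + 2" by (metis add.commute le_Suc_ex not_less)
    have "of_nat (card (Vs True e (m + 2))) + of_nat (\<Sum>i=0..m. S1 e i * Z0 (m - i)) +
          of_nat (\<Sum>i=0..m. S2 e i * Z1 (m - i)) = (of_nat (card (Vs False e (m + 2))) :: rat)"
      using VsT[of e m] by (metis of_nat_add)
    then show ?thesis unfolding n fps_add_nth fps_X_power_mult_nth
      by (simp add: GG_def fps_mult_nth)
  qed
qed

lemma fK: "FF (\<lambda>n. kk n e) = (if e then 0 else 1) + FF (\<lambda>n. kk n True) * FF (GG True e)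
   + FF (\<lambda>n. kk n False) * FF (GG False e)"
proof (rule fps_ext)
  fix n
  show "fps_nth (FF (\<lambda>n. kk n e)) n = fps_nth ((if e then 0 else 1) + FF (\<lambda>n. kk n True) * FF (GG True e)
   + FF (\<lambda>n. kk n False) * FF (GG False e)) n"
  proof (cases n)
    case 0 then show ?thesis by (simp add: kk0 GG_def Vs_small)
  next
    case (Suc n')
    have s: "(\<Sum>i=0..n. f i) = (\<Sum>i<n. f i) + f n" for f :: "nat \<Rightarrow> rat"
      by (simp add: atLeast0AtMost lessThan_Suc_atMost[symmetric])
    have v0: "card (Vs e1 e2 0) = 0" for e1 e2 by (simp add: Vs_small)
    have r: "fps_nth ((if e then 0 else 1) + FF (\<lambda>n. kk n True) * FF (GG True e)
      + FF (\<lambda>n. kk n False) * FF (GG False e)) n =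
      (\<Sum>i<n. of_nat (kk i True) * of_nat (card (Vs True e (n - i)))) +
      (\<Sum>i<n. of_nat (kk i False) * of_nat (card (Vs False e (n - i))))"
      unfolding fps_add_nth fps_mult_nth FF_nth GG_def s using Suc by (simp add: v0)
    have "kk n e = (\<Sum>a<n. kk a True * card (Vs True e (n - a)) + kk a False * card (Vs False e (n - a)))"
      using kk_rec[of n e] Suc by simp
    then have "(of_nat (kk n e) :: rat) = (\<Sum>a<n. of_nat (kk a True) * of_nat (card (Vs True e (n - a)))
         + of_nat (kk a False) * of_nat (card (Vs False e (n - a))))"
      by simp
    then show ?thesis unfolding r FF_nth by (simp add: sum.distrib)
  qed
qed



lemma alg_T:
  fixes WT WF T :: "rat fps"
  assumes "WT = X * T" "WF = 1 + X * WF + X * T" "T = WT + WF"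
  shows "T * (1 - 3 * X + X^2) = 1" "WT * (1 - 3 * X + X^2) = X" "WF * (1 - 3 * X + X^2) = 1 - X"
  using assms by algebra+

lemma alg_Z:
  fixes Z0 Y Z1 :: "rat fps"
  assumes "Z0 = 1 + X * Z0 + X * Z0" "Y = 1 + X * Z0" "Z1 = X * Y + X * Z1 + X * Z1"
  shows "Z0 * (1 - 2 * X) = 1" "Z1 * (1 - 2 * X)^2 = X * (1 - X)"
  using assms by algebra+

lemma alg_final:
  fixes T WT WF Z0 Z1 M :: "rat fps"
  assumes "T * (1 - 3 * X + X^2) = 1" "WT * (1 - 3 * X + X^2) = X" "WF * (1 - 3 * X + X^2) = 1 - X"
    "Z0 * (1 - 2 * X) = 1" "Z1 * (1 - 2 * X)^2 = X * (1 - X)"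
    "M = X^2 * WT * M * (T - X * Z0 - X^2 * Z1) + T + X^2 * WF * M * T"
  shows "X^2 * T * M * (1 - 10 * X + 38 * X ^ 2 - 70 * X ^ 3 + 66 * X ^ 4 - 33 * X ^ 5
        + 12 * X ^ 6 - 6 * X ^ 7 + 4 * X ^ 8 - X ^ 9) = X^2 * (1 - 2 * X)^2"
  using assms by algebra



theorem theorem4p2:
  shows "Abs_fps (\<lambda>n. if n \<ge> 2 then (of_nat (kseq n) :: rat) else 0) =
     (fps_X ^ 2 * (1 - 2 * fps_X) ^ 2) /
     (1 - 10 * fps_X + 38 * fps_X ^ 2 - 70 * fps_X ^ 3 + 66 * fps_X ^ 4 - 33 * fps_X ^ 5
        + 12 * fps_X ^ 6 - 6 * fps_X ^ 7 + 4 * fps_X ^ 8 - fps_X ^ 9)"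
proof -
  define T where "T = FF Tc"
  define WT where "WT = FF (Wc True)"
  define WF where "WF = FF (Wc False)"
  define Z0' where "Z0' = FF Z0"
  define Y where "Y = FF Yc"
  define Z1' where "Z1' = FF Z1"
  define KT where "KT = FF (\<lambda>n. kk n True)"
  define KF where "KF = FF (\<lambda>n. kk n False)"
  define H where "H = T - X * Z0' - X^2 * Z1'"
  define M where "M = KT * H + KF * T"
  define Den :: "rat fps" where "Den = (1 - 10 * fps_X + 38 * fps_X ^ 2 - 70 * fps_X ^ 3 + 66 * fps_X ^ 4 - 33 * fps_X ^ 5
        + 12 * fps_X ^ 6 - 6 * fps_X ^ 7 + 4 * fps_X ^ 8 - fps_X ^ 9)"
  have t: "T * (1 - 3 * X + X^2) = 1" "WT * (1 - 3 * X + X^2) = X" "WF * (1 - 3 * X + X^2) = 1 - X"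
    using alg_T[OF fWT fWF fT] unfolding T_def WT_def WF_def by auto
  have z: "Z0' * (1 - 2 * X) = 1" "Z1' * (1 - 2 * X)^2 = X * (1 - X)"
    using alg_Z[OF fZ0 fY fZ1] unfolding Z0'_def Z1'_def by auto
  have GT: "FF (GG True e) = X^2 * FF (Wc e) * H" for e
  proof -
    have "FF (GG True e) = X^2 * (FF (Wc e) * FF Tc) - X^2 * (X * FF (Wc e) * FF Z0) - X^2 * (X * (X * FF (Wc e)) * FF Z1)"
      using fGT[of e] unfolding fGF fS2 fS1 by (simp add: algebra_simps)
    then show ?thesis unfolding H_def T_def Z0'_def Z1'_def by (simp add: algebra_simps power2_eq_square)
  qed
  have kT: "KT = KT * (X^2 * WT * H) + KF * (X^2 * (WT * T))"
    using fK[of True] unfolding KT_def KF_def WT_def T_def GT fGF by simp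
  have kF: "KF = 1 + KT * (X^2 * WF * H) + KF * (X^2 * (WF * T))"
    using fK[of False] unfolding KT_def KF_def WF_def T_def GT fGF by simp
  have kT': "KT = X^2 * WT * M" using kT unfolding M_def by algebra
  have kF': "KF = 1 + X^2 * WF * M" using kF unfolding M_def by algebra
  have m: "M = X^2 * WT * M * (T - X * Z0' - X^2 * Z1') + T + X^2 * WF * M * T"
    using kT' kF' unfolding M_def H_def by algebra
  have fin: "X^2 * T * M * Den = X^2 * (1 - 2 * X)^2"
    using alg_final[OF t z m] unfolding Den_def by simp
  have TW: "T = WT + WF" unfolding T_def WT_def WF_def by (rule fT)
  have D: "KT + KF - 1 = X^2 * T * M" using kT' kF' TW by algebra
  have L: "Abs_fps (\<lambda>n. if n \<ge> 2 then (of_nat (kseq n) :: rat) else 0) = X^2 * T * M"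
  proof (rule fps_ext)
    fix n
    show "fps_nth (Abs_fps (\<lambda>n. if n \<ge> 2 then (of_nat (kseq n) :: rat) else 0)) n = fps_nth (X^2 * T * M) n"
    proof (cases "n < 2")
      case True then show ?thesis by (simp add: fps_X_power_mult_nth mult.assoc)
    next
      case False
      have "fps_nth (X^2 * T * M) n = fps_nth (KT + KF - 1) n" using D by simp
      also have "\<dots> = of_nat (kk n True) + of_nat (kk n False)" using False
        by (simp add: KT_def KF_def)
      also have "\<dots> = of_nat (kseq n)" using False kseq_kk[of n] by simp
      finally show ?thesis using False by simp
    qed
  qed
  have d0: "fps_nth Den 0 \<noteq> 0" unfolding Den_def by simp
  have "(fps_X ^ 2 * (1 - 2 * fps_X) ^ 2) / Den = (X^2 * T * M * Den) * inverse Den"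
    using fin fps_divide_unit[OF d0] by simp
  also have "\<dots> = X^2 * T * M" using inverse_mult_eq_1'[OF d0] by (simp add: mult.assoc)
  finally show ?thesis unfolding L Den_def by simp
qed

end
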